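(* Let $X,U$ be Banach spaces and $\mathcal{U}=PC(\mathbb{R}_+,U)$. Let $\{A(t)\}_{t\ge0}$ generate a strongly continuous evolution family $\{W(t,s)\}_{t\ge s\ge0}$. Let $B\in C(\mathbb{R}_+,L(U,X))$ with $\|B\|_\infty=\sup_t\|B(t)\|<\infty$. Let $\psi:\mathbb{R}_+\times X\times U\to X$, and consider $$\dot x=A(t)x+B(t)u+\psi(t,x,u),\quad x(t_0)=x_0. \tag{N}$$ Assume that $\Psi(t,x,u)=B(t)u+\psi(t,x,u)$ satisfies $(\mathcal{H}_1)$ and that $\psi$ satisfies $(\mathcal{H}_2)$. If the linear system $\dot x=A(t)x+B(t)u$ is 0-UGAS, then $$V(t,x)=\int_t^\infty\|W(\tau,t)x\|_X^2\,d\tau$$ is a non-coercive LISS Lyapunov function in implication form for (N).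
   Context: A strongly continuous evolution family generated by $\{A(t)\}$ satisfies: - $W(s,s)=I$ and $W(t,s)=W(t,r)W(r,s)$; - $(t,s)\mapsto W(t,s)x$ is continuous; - for $v\in D(A(s))$: $\partial_tW(t,s)v=A(t)W(t,s)v$ and $\partial_sW(t,s)v=-W(t,s)A(s)v$. $PC(\mathbb{R}_+,U)$ consists of bounded, right-continuous, piecewise continuous functions, with the sup norm $\|\cdot\|_{\mathcal{U}}$. $(\mathcal{H}_1)$: $\Psi$ is jointly continuous in $(t,u)$ and, for each $c,\tilde t\ge0$, Lipschitz in $x$ uniformly over $t\in[0,\tilde t]$ and $\|x\|,\|u\|\le c$. Under $(\mathcal{H}_1)$, (N) has unique maximal mild solutions $\phi(t,t_0,x_0,u)=W(t,t_0)x_0+\int_{t_0}^tW(t,s)\Psi(s,\phi(s),u(s))ds$. $(\mathcal{H}_2)$: for each $a>0$ there exist $b>0$ and $\rho>0$ such that $\|\psi(t,x,v)\|_X\le a\|x\|_X+b\|v\|_U$ for all $t\ge0$, $x\in X$ and $v\in U$ with $\|x\|_X,\|v\|_U\le\rho$. 0-UGAS of the linear system: there is $\beta\in\mathcal{KL}$ with $\|W(t,t_0)x_0\|\le\beta(\|x_0\|,t-t_0)$. Lie derivative: $\dot V_u(t,x)=\limsup_{h\to0^+}\frac1h(V(t+h,\phi(t+h,t,x,u))-V(t,x))$. Non-coercive LISS Lyapunov function in implication form. A continuous $V:\mathbb{R}_+\times D\to\mathbb{R}_+$ ($D\ni0$ open) with $V(t,0)=0$, for which there exist $\alpha_2\in\mathcal{K}_\infty$,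 $\kappa\in\mathcal{K}$, positive definite $\mu$ and $r_1,r_2>0$ with $\{\|x\|\le r_1\}\subset D$, such that: - $0<V(t,x)\le\alpha_2(\|x\|_X)$ for $x\in D\setminus\{0\}$ and $t\ge0$; - for all $t\ge0$, $\|x\|_X\le r_1$ and $u\in\mathcal{U}$ with $\|u\|_{\mathcal{U}}\le r_2$: $\|x\|_X\ge\kappa(\|u\|_{\mathcal{U}})$ implies $\dot V_u(t,x)\le-\mu(V(t,x))$. *)

theory Defs
  imports "HOL-Analysis.Analysis" "HOL-Library.Liminf_Limsup"
begin

definition classK :: "(real \<Rightarrow> real) \<Rightarrow> bool" where
  "classK \<gamma> \<longleftrightarrow> continuous_on {0..} \<gamma> \<and> \<gamma> 0 = 0 \<and> strict_mono_on {0..} \<gamma>"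

definition classKinf :: "(real \<Rightarrow> real) \<Rightarrow> bool" where
  "classKinf \<gamma> \<longleftrightarrow> classK \<gamma> \<and> filterlim \<gamma> at_top at_top"

definition classKL :: "(real \<Rightarrow> real \<Rightarrow> real) \<Rightarrow> bool" where
  "classKL \<beta> \<longleftrightarrow> continuous_on ({0..} \<times> {0..}) (\<lambda>(r,t). \<beta> r t)
     \<and> (\<forall>t\<ge>0. classK (\<lambda>r. \<beta> r t))
     \<and> (\<forall>r\<ge>0. antimono_on {0..} (\<beta> r) \<and> (\<beta> r \<longlongrightarrow> 0) at_top)"

definition posdef :: "(real \<Rightarrow> real) \<Rightarrow> bool" where
  "posdef \<mu> \<longleftrightarrow> continuous_on {0..} \<mu> \<and> \<mu> 0 = 0 \<and> (\<forall>s>0. \<mu> s > 0)"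

definition evolution_family ::
  "(real \<Rightarrow> 'x::banach \<Rightarrow> 'x) \<Rightarrow> (real \<Rightarrow> 'x set) \<Rightarrow> (real \<Rightarrow> real \<Rightarrow> 'x \<Rightarrow>\<^sub>L 'x) \<Rightarrow> bool" where
  "evolution_family A DA W \<longleftrightarrow>
     (\<forall>s\<ge>0. W s s = id_blinfun)
   \<and> (\<forall>s r t. 0 \<le> s \<and> s \<le> r \<and> r \<le> t \<longrightarrow> W t s = W t r o\<^sub>L W r s)
   \<and> (\<forall>x. continuous_on {(t,s). 0 \<le> s \<and> s \<le> t} (\<lambda>(t,s). blinfun_apply (W t s) x))
   \<and> (\<forall>s t v. 0 \<le> s \<and> s \<le> t \<and> v \<in> DA s \<longrightarrow>
         blinfun_apply (W t s) v \<in> DA t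
       \<and> ((\<lambda>t'. blinfun_apply (W t' s) v) has_vector_derivative
             A t (blinfun_apply (W t s) v)) (at t within {s..})
       \<and> ((\<lambda>s'. blinfun_apply (W t s') v) has_vector_derivative
             - blinfun_apply (W t s) (A s v)) (at s within {0..t}))"

definition pc_input :: "(real \<Rightarrow> 'u::real_normed_vector) \<Rightarrow> bool" where
  "pc_input u \<longleftrightarrow> bounded (u ` {0..})
     \<and> (\<forall>t\<ge>0. continuous (at_right t) u)
     \<and> (\<forall>t>0. \<exists>l. (u \<longlongrightarrow> l) (at_left t))
     \<and> (\<forall>T. finite {t. 0 < t \<and> t \<le> T \<and> \<not> isCont u t})"

definition input_norm :: "(real \<Rightarrow> 'u::real_normed_vector) \<Rightarrow> real" where
  "input_norm u = (SUP t\<in>{0..}. norm (u t))"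

definition H1 :: "(real \<Rightarrow> 'x::real_normed_vector \<Rightarrow> 'u::real_normed_vector \<Rightarrow> 'x) \<Rightarrow> bool" where
  "H1 \<Psi> \<longleftrightarrow> (\<forall>x. continuous_on ({0..} \<times> UNIV) (\<lambda>(t,v). \<Psi> t x v))
     \<and> (\<forall>c\<ge>0. \<forall>T\<ge>0. \<exists>L>0. \<forall>t x y v. 0 \<le> t \<and> t \<le> T \<and> norm x \<le> c \<and> norm y \<le> c \<and> norm v \<le> c
          \<longrightarrow> norm (\<Psi> t x v - \<Psi> t y v) \<le> L * norm (x - y))"

definition H2 :: "(real \<Rightarrow> 'x::real_normed_vector \<Rightarrow> 'u::real_normed_vector \<Rightarrow> 'x) \<Rightarrow> bool" where
  "H2 \<psi> \<longleftrightarrow> (\<forall>a>0. \<exists>b>0. \<exists>\<rho>>0. \<forall>t x v. t \<ge> 0 \<and> norm x \<le> \<rho> \<and> norm v \<le> \<rho>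
          \<longrightarrow> norm (\<psi> t x v) \<le> a * norm x + b * norm v)"

definition zero_UGAS :: "(real \<Rightarrow> real \<Rightarrow> 'x::real_normed_vector \<Rightarrow>\<^sub>L 'x) \<Rightarrow> bool" where
  "zero_UGAS W \<longleftrightarrow> (\<exists>\<beta>. classKL \<beta> \<and>
     (\<forall>t0 t x0. 0 \<le> t0 \<and> t0 \<le> t \<longrightarrow> norm (blinfun_apply (W t t0) x0) \<le> \<beta> (norm x0) (t - t0)))"

definition mild_sol ::
  "(real \<Rightarrow> real \<Rightarrow> 'x::banach \<Rightarrow>\<^sub>L 'x) \<Rightarrow> (real \<Rightarrow> 'x \<Rightarrow> 'u \<Rightarrow> 'x) \<Rightarrow> (real \<Rightarrow> 'u)
     \<Rightarrow> real \<Rightarrow> 'x \<Rightarrow> real \<Rightarrow> (real \<Rightarrow> 'x) \<Rightarrow> bool" where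
  "mild_sol W \<Psi> u t0 x0 d y \<longleftrightarrow> d > 0 \<and> continuous_on {t0..t0+d} y \<and>
     (\<forall>t\<in>{t0..t0+d}.
        (\<lambda>s. blinfun_apply (W t s) (\<Psi> s (y s) (u s))) integrable_on {t0..t}
      \<and> y t = blinfun_apply (W t t0) x0 + integral {t0..t} (\<lambda>s. blinfun_apply (W t s) (\<Psi> s (y s) (u s))))"

definition lie_deriv_le ::
  "(real \<Rightarrow> real \<Rightarrow> 'x::banach \<Rightarrow>\<^sub>L 'x) \<Rightarrow> (real \<Rightarrow> 'x \<Rightarrow> 'u \<Rightarrow> 'x) \<Rightarrow> (real \<Rightarrow> 'x \<Rightarrow> real)
     \<Rightarrow> (real \<Rightarrow> 'u) \<Rightarrow> real \<Rightarrow> 'x \<Rightarrow> real \<Rightarrow> bool" where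
  "lie_deriv_le W \<Psi> V u t x c \<longleftrightarrow>
     (\<forall>d y. mild_sol W \<Psi> u t x d y \<longrightarrow>
        Limsup (at_right 0) (\<lambda>h. ereal ((V (t + h) (y (t + h)) - V t x) / h)) \<le> ereal c)"

definition ncLISS_Lyapunov_impl ::
  "(real \<Rightarrow> real \<Rightarrow> 'x::banach \<Rightarrow>\<^sub>L 'x) \<Rightarrow> (real \<Rightarrow> 'x \<Rightarrow> 'u::banach \<Rightarrow> 'x) \<Rightarrow> (real \<Rightarrow> 'x \<Rightarrow> real) \<Rightarrow> bool" where
  "ncLISS_Lyapunov_impl W \<Psi> V \<longleftrightarrow>
    (\<exists>D \<alpha>2 \<kappa> \<mu> r1 r2.
       open D \<and> 0 \<in> D \<and>
       continuous_on ({0..} \<times> D) (\<lambda>(t,x). V t x) \<and>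
       (\<forall>t\<ge>0. \<forall>x\<in>D. V t x \<ge> 0) \<and>
       (\<forall>t\<ge>0. V t 0 = 0) \<and>
       classKinf \<alpha>2 \<and> classK \<kappa> \<and> posdef \<mu> \<and> r1 > 0 \<and> r2 > 0 \<and> cball 0 r1 \<subseteq> D \<and>
       (\<forall>t\<ge>0. \<forall>x\<in>D - {0}. 0 < V t x \<and> V t x \<le> \<alpha>2 (norm x)) \<and>
       (\<forall>t\<ge>0. \<forall>x u. norm x \<le> r1 \<and> pc_input u \<and> input_norm u \<le> r2 \<and> norm x \<ge> \<kappa> (input_norm u)
           \<longrightarrow> lie_deriv_le W \<Psi> V u t x (- \<mu> (V t x))))"

end

theory Submission
  imports Defs
begin


lemma ugas_homog:
  assumes "classKL \<beta>" and B: "\<forall>t0 t x0. 0 \<le> t0 \<and> t0 \<le> t \<longrightarrow> norm (blinfun_apply (W t t0) x0) \<le> \<beta> (norm x0) (t - t0)"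
    and "0 \<le> s" "s \<le> \<tau>"
  shows "norm (blinfun_apply (W \<tau> s) v) \<le> norm v * \<beta> 1 (\<tau> - s)"
proof (cases "v = 0")
  case True then show ?thesis by simp
next
  case False
  have "blinfun_apply (W \<tau> s) v = norm v *\<^sub>R blinfun_apply (W \<tau> s) (v /\<^sub>R norm v)"
    using False by (simp add: blinfun.scaleR_right)
  hence "norm (blinfun_apply (W \<tau> s) v) = norm v * norm (blinfun_apply (W \<tau> s) (v /\<^sub>R norm v))"
    by simp
  also have "\<dots> \<le> norm v * \<beta> (norm (v /\<^sub>R norm v)) (\<tau> - s)"
  proof (rule mult_left_mono)
    show "norm (blinfun_apply (W \<tau> s) (v /\<^sub>R norm v)) \<le> \<beta> (norm (v /\<^sub>R norm v)) (\<tau> - s)"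
      using B assms(3,4) by blast
  qed simp
  also have "norm (v /\<^sub>R norm v) = 1" using False by simp
  finally show ?thesis by simp
qed

lemma exp_stab:
  assumes EF: "evolution_family A DA W" and U: "zero_UGAS W"
  shows "\<exists>M \<omega>. M \<ge> 1 \<and> \<omega> > 0 \<and> (\<forall>s \<tau> v. 0 \<le> s \<and> s \<le> \<tau> \<longrightarrow>
            norm (blinfun_apply (W \<tau> s) v) \<le> M * exp (-\<omega> * (\<tau> - s)) * norm v)"
proof -
  obtain \<beta> where KL: "classKL \<beta>" and B: "\<forall>t0 t x0. 0 \<le> t0 \<and> t0 \<le> t \<longrightarrow> norm (blinfun_apply (W t t0) x0) \<le> \<beta> (norm x0) (t - t0)"
    using U unfolding zero_UGAS_def by blast
  define g where "g r = \<beta> 1 r" for r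
  have hom: "norm (blinfun_apply (W \<tau> s) v) \<le> norm v * g (\<tau> - s)" if "0 \<le> s" "s \<le> \<tau>" for s \<tau> v
    using ugas_homog[OF KL B that] by (simp add: g_def)
  have anti: "antimono_on {0..} g" and lim: "(g \<longlongrightarrow> 0) at_top"
    using KL unfolding classKL_def g_def by auto
  have "eventually (\<lambda>r. g r < 1/2) at_top"
    using lim by (rule order_tendstoD) simp
  then obtain T0 where T0: "\<And>r. r \<ge> T0 \<Longrightarrow> g r < 1/2" by (auto simp: eventually_at_top_linorder)
  define T where "T = max T0 1"
  have T: "T > 0" "g T \<le> 1/2" using T0[of T] by (auto simp: T_def)
  define M0 where "M0 = max 1 (g 0)"
  have gM0: "g r \<le> M0" if "r \<ge> 0" for r
    using anti that unfolding monotone_on_def M0_def by (metis atLeast_iff max.coboundedI2 order_refl)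
  have ind: "\<forall>s \<tau> v. 0 \<le> s \<and> s + real n * T \<le> \<tau> \<longrightarrow> norm (blinfun_apply (W \<tau> s) v) \<le> M0 * (1/2)^n * norm v" for n
  proof (induction n)
    case 0
    show ?case
    proof (intro allI impI)
      fix s \<tau> v assume "0 \<le> s \<and> s + real 0 * T \<le> \<tau>"
      hence "norm (blinfun_apply (W \<tau> s) v) \<le> norm v * g (\<tau> - s)" "g (\<tau> - s) \<le> M0"
        using hom gM0 by auto
      thus "norm (blinfun_apply (W \<tau> s) v) \<le> M0 * (1/2)^0 * norm v"
        by (metis mult.commute mult_left_mono norm_ge_zero order_trans power_0 mult_1_right)
    qed
  next
    case (Suc n)
    show ?case
    proof (intro allI impI)
      fix s \<tau> v assume a: "0 \<le> s \<and> s + real (Suc n) * T \<le> \<tau>"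
      have comp: "W \<tau> s = W \<tau> (s+T) o\<^sub>L W (s+T) s"
      proof -
        have "T * 1 \<le> T * real (Suc n)" using T by (intro mult_left_mono) auto
        hence "s + T \<le> \<tau>" using a by (simp add: mult.commute)
        thus ?thesis using EF a T unfolding evolution_family_def by auto
      qed
      have "norm (blinfun_apply (W \<tau> s) v) = norm (blinfun_apply (W \<tau> (s+T)) (blinfun_apply (W (s+T) s) v))"
        by (simp add: comp)
      also have "\<dots> \<le> M0 * (1/2)^n * norm (blinfun_apply (W (s+T) s) v)"
      proof -
        have "0 \<le> s + T \<and> (s+T) + real n * T \<le> \<tau>" using a T by (auto simp: algebra_simps)
        thus ?thesis using Suc by blast
      qed
      also have "norm (blinfun_apply (W (s+T) s) v) \<le> norm v * (1/2)"
        using hom[of s "s+T" v] a T by (smt (verit) mult_left_mono norm_ge_zero add_diff_cancel_left')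
      hence "M0 * (1/2)^n * norm (blinfun_apply (W (s+T) s) v) \<le> M0 * (1/2)^n * (norm v * (1/2))"
        by (intro mult_left_mono) (auto simp: M0_def)
      finally show "norm (blinfun_apply (W \<tau> s) v) \<le> M0 * (1/2)^(Suc n) * norm v" by simp
    qed
  qed
  define \<omega> where "\<omega> = ln 2 / T"
  have \<omega>: "\<omega> > 0" using T by (simp add: \<omega>_def)
  have "norm (blinfun_apply (W \<tau> s) v) \<le> (2*M0) * exp (-\<omega> * (\<tau> - s)) * norm v" if "0 \<le> s" "s \<le> \<tau>" for s \<tau> v
  proof -
    define n where "n = nat (floor ((\<tau> - s) / T))"
    have q: "(\<tau>-s)/T \<ge> 0" using that T by simp
    have n1: "real n \<le> (\<tau>-s)/T" using q by (simp add: n_def)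
    have n2: "(\<tau>-s)/T < real n + 1" using q by (simp add: n_def)
    have "s + real n * T \<le> \<tau>" using n1 T by (simp add: field_simps)
    hence "norm (blinfun_apply (W \<tau> s) v) \<le> M0 * (1/2)^n * norm v" using ind that by blast
    also have "(1/2::real)^n \<le> 2 * exp (-\<omega> * (\<tau> - s))"
    proof -
      have e2: "exp (ln 2 * real n) = (2::real)^n"
        by (metis exp_ln exp_of_nat_mult mult.commute zero_less_numeral)
      have "(1/2::real)^n = 2 * exp (- ln 2 * (real n + 1))"
        using e2 by (simp add: exp_minus exp_of_nat_mult[symmetric] distrib_left power_divide exp_add[symmetric] exp_diff inverse_eq_divide)
      also have "\<dots> \<le> 2 * exp (-\<omega> * (\<tau> - s))"
      proof -
        have k: "\<tau> - s \<le> T*(real n + 1)" using n2 T by (simp add: field_simps)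
        have "(\<tau> - s) * ln 2 \<le> T*(real n + 1) * ln 2" by (rule mult_right_mono[OF k]) simp
        hence "- ln 2 * (real n + 1) \<le> -\<omega> * (\<tau> - s)" using T by (simp add: \<omega>_def field_simps)
        thus ?thesis by simp
      qed
      finally show ?thesis .
    qed
    hence "M0 * (1/2)^n * norm v \<le> M0 * (2 * exp (-\<omega> * (\<tau> - s))) * norm v"
      by (intro mult_right_mono mult_left_mono) (auto simp: M0_def)
    finally show ?thesis by simp
  qed
  moreover have "2*M0 \<ge> 1" by (simp add: M0_def)
  ultimately show ?thesis using \<omega> by blast
qed


lemma exp_int:
  fixes a c c0 :: real
  assumes "a > 0"
  shows "((\<lambda>\<tau>. exp (-a*(\<tau> - c0))) has_integral exp (-a*(c - c0))/a) {c..}"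
proof -
  have "((\<lambda>\<tau>. exp (a*c0) * exp (-a*\<tau>)) has_integral exp (a*c0) * (exp (-a*c)/a)) {c..}"
    using has_integral_exp_minus_to_infinity[OF assms, of c] by (rule has_integral_mult_right)
  moreover have "\<And>\<tau>. exp (a*c0) * exp (-a*\<tau>) = exp (-a*(\<tau> - c0))"
    by (simp add: exp_add[symmetric] algebra_simps)
  moreover have "exp (a*c0) * (exp (-a*c)/a) = exp (-a*(c - c0))/a"
    by (simp add: exp_add[symmetric] algebra_simps)
  ultimately show ?thesis by simp
qed

lemma cont_W:
  assumes EF: "evolution_family A DA W" and "0 \<le> s"
  shows "continuous_on {s..} (\<lambda>\<tau>. blinfun_apply (W \<tau> s) v)"
proof -
  have c: "continuous_on {(t,s). 0 \<le> s \<and> s \<le> t} (\<lambda>(t,s). blinfun_apply (W t s) v)"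
    using EF unfolding evolution_family_def by blast
  have "continuous_on {s..} (\<lambda>\<tau>. (\<lambda>(t,s). blinfun_apply (W t s) v) (\<tau>, s))"
    by (rule continuous_on_compose2[OF c]) (use assms(2) in \<open>auto intro!: continuous_intros\<close>)
  thus ?thesis by simp
qed

lemma V_int:
  assumes EF: "evolution_family A DA W"
    and Mb: "\<forall>s \<tau> v. 0 \<le> s \<and> s \<le> \<tau> \<longrightarrow> norm (blinfun_apply (W \<tau> s) v) \<le> M * exp (-\<omega> * (\<tau> - s)) * norm v"
    and \<omega>: "\<omega> > 0" and s: "0 \<le> s"
  shows "(\<lambda>\<tau>. (norm (blinfun_apply (W \<tau> s) v))\<^sup>2) integrable_on {s..}"
    and "integral {s..} (\<lambda>\<tau>. (norm (blinfun_apply (W \<tau> s) v))\<^sup>2) \<le> M\<^sup>2 / (2*\<omega>) * (norm v)\<^sup>2"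
proof -
  define g where "g \<tau> = M\<^sup>2 * (norm v)\<^sup>2 * exp (-(2*\<omega>)*(\<tau> - s))" for \<tau>
  have gi: "(g has_integral M\<^sup>2 * (norm v)\<^sup>2 * (exp (-(2*\<omega>)*(s - s))/(2*\<omega>))) {s..}"
    unfolding g_def using exp_int[of "2*\<omega>" s s] \<omega> by (intro has_integral_mult_right) auto
  have le: "norm ((norm (blinfun_apply (W \<tau> s) v))\<^sup>2) \<le> g \<tau>" if "\<tau> \<in> {s..}" for \<tau>
  proof -
    have "norm (blinfun_apply (W \<tau> s) v) \<le> M * exp (-\<omega> * (\<tau> - s)) * norm v" using Mb s that by auto
    hence "(norm (blinfun_apply (W \<tau> s) v))\<^sup>2 \<le> (M * exp (-\<omega> * (\<tau> - s)) * norm v)\<^sup>2"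
      by (intro power_mono) auto
    also have "\<dots> = g \<tau>" unfolding g_def
      by (simp add: power_mult_distrib power2_eq_square exp_add[symmetric] algebra_simps)
    finally show ?thesis by simp
  qed
  have cont: "continuous_on {s..} (\<lambda>\<tau>. (norm (blinfun_apply (W \<tau> s) v))\<^sup>2)"
    by (rule continuous_on_power[OF continuous_on_norm[OF cont_W[OF EF s]]])
  show I: "(\<lambda>\<tau>. (norm (blinfun_apply (W \<tau> s) v))\<^sup>2) integrable_on {s..}"
    by (rule measurable_bounded_by_integrable_imp_integrable[OF continuous_imp_measurable_on_sets_lebesgue[OF cont] _ le])
       (use gi in \<open>auto simp: integrable_on_def\<close>)
  have "integral {s..} (\<lambda>\<tau>. (norm (blinfun_apply (W \<tau> s) v))\<^sup>2) \<le> integral {s..} g"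
    by (rule integral_le[OF I]) (use gi le in \<open>auto simp: integrable_on_def\<close>)
  also have "\<dots> = M\<^sup>2 / (2*\<omega>) * (norm v)\<^sup>2" using integral_unique[OF gi] by simp
  finally show "integral {s..} (\<lambda>\<tau>. (norm (blinfun_apply (W \<tau> s) v))\<^sup>2) \<le> M\<^sup>2 / (2*\<omega>) * (norm v)\<^sup>2" .
qed

lemma V_lower:
  assumes EF: "evolution_family A DA W" and s: "0 \<le> s" and \<eta>: "\<eta> > 0"
  shows "\<exists>h0>0. \<forall>h. 0 < h \<and> h \<le> h0 \<longrightarrow>
           h * ((norm v)\<^sup>2 - \<eta>) \<le> integral {s..s+h} (\<lambda>\<tau>. (norm (blinfun_apply (W \<tau> s) v))\<^sup>2)"
proof -
  define f where "f \<tau> = (norm (blinfun_apply (W \<tau> s) v))\<^sup>2" for \<tau>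
  have cont: "continuous_on {s..} f"
    unfolding f_def by (rule continuous_on_power[OF continuous_on_norm[OF cont_W[OF EF s]]])
  have fs: "f s = (norm v)\<^sup>2" using EF s unfolding evolution_family_def f_def by simp
  obtain d where d: "d > 0" "\<And>x'. x' \<in> {s..} \<Longrightarrow> dist x' s < d \<Longrightarrow> dist (f x') (f s) < \<eta>"
    using cont \<eta> unfolding continuous_on_iff by (meson atLeast_iff order_refl)
  show ?thesis
  proof (intro exI[of _ "d/2"] conjI allI impI)
    show "d/2 > 0" using d by simp
    fix h assume h: "0 < h \<and> h \<le> d/2"
    have fi: "f integrable_on {s..s+h}"
      by (rule integrable_continuous_interval, rule continuous_on_subset[OF cont]) auto
    have "integral {s..s+h} (\<lambda>_. (norm v)\<^sup>2 - \<eta>) \<le> integral {s..s+h} f"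
    proof (rule integral_le[OF _ fi])
      fix x assume x: "x \<in> {s..s+h}"
      hence "dist (f x) (f s) < \<eta>" using d h by (intro d(2)) (auto simp: dist_real_def)
      thus "(norm v)\<^sup>2 - \<eta> \<le> f x" using fs by (simp add: dist_real_def)
    qed (rule integrable_const_ivl)
    thus "h * ((norm v)\<^sup>2 - \<eta>) \<le> integral {s..s+h} (\<lambda>\<tau>. (norm (blinfun_apply (W \<tau> s) v))\<^sup>2)"
      using h unfolding f_def[abs_def] by simp
  qed
qed


lemma V_cont:
  assumes EF: "evolution_family A DA W"
    and Mb: "\<forall>s \<tau> v. 0 \<le> s \<and> s \<le> \<tau> \<longrightarrow> norm (blinfun_apply (W \<tau> s) v) \<le> M * exp (-\<omega> * (\<tau> - s)) * norm v"
    and \<omega>: "\<omega> > 0" and M: "M \<ge> 1"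
  shows "continuous_on ({0..} \<times> UNIV) (\<lambda>(t,x). integral {t..} (\<lambda>\<tau>. (norm (blinfun_apply (W \<tau> t) x))\<^sup>2))"
proof (rule continuous_on_sequentiallyI)
  fix u a assume u: "\<forall>n. u n \<in> {0::real..} \<times> (UNIV::'a set)" and a: "a \<in> {0::real..} \<times> (UNIV::'a set)"
    and lim: "u \<longlonglongrightarrow> a"
  obtain t0 x0 where a0: "a = (t0, x0)" by (cases a)
  define t where "t n = fst (u n)" for n
  define x where "x n = snd (u n)" for n
  have u_eq: "u n = (t n, x n)" for n by (simp add: t_def x_def)
  have tl: "t \<longlonglongrightarrow> t0" unfolding t_def using tendsto_fst[OF lim] a0 by simp
  have xl: "x \<longlonglongrightarrow> x0" unfolding x_def using tendsto_snd[OF lim] a0 by simp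
  have t0: "t0 \<ge> 0" using a a0 by auto
  have tn: "t n \<ge> 0" for n using u by (auto simp: t_def mem_Times_iff)
  obtain Tm where Tm: "\<And>n. norm (t n) \<le> Tm" using convergent_imp_Bseq[OF convergentI[OF tl]] by (auto simp: Bseq_def)
  obtain Bx where Bx: "\<And>n. norm (x n) \<le> Bx" using convergent_imp_Bseq[OF convergentI[OF xl]] by (auto simp: Bseq_def)
  define F where "F s y \<tau> = (if \<tau> \<in> {s..} then (norm (blinfun_apply (W \<tau> s) y))\<^sup>2 else 0)" for s y \<tau>
  define S where "S = UNIV - {t0}"
  have spike: "integral UNIV f = integral S f" and spike_i: "f integrable_on UNIV \<Longrightarrow> f integrable_on S" for f :: "real \<Rightarrow> real"
  proof -
    have n1: "negligible {\<tau> \<in> UNIV - S. f \<tau> \<noteq> 0}" by (rule negligible_subset[of "{t0}"]) (auto simp: S_def)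
    have n2: "negligible {\<tau> \<in> S - UNIV. f \<tau> \<noteq> 0}" by simp
    show "integral UNIV f = integral S f" by (rule integral_spike_set[OF n1 n2])
    show "f integrable_on UNIV \<Longrightarrow> f integrable_on S" by (rule integrable_spike_set[OF _ n1 n2])
  qed
  have Veq: "integral {s..} (\<lambda>\<tau>. (norm (blinfun_apply (W \<tau> s) y))\<^sup>2) = integral S (F s y)" for s y
    unfolding F_def spike[symmetric]
    using Henstock_Kurzweil_Integration.integral_restrict_UNIV[of "{s..}" "\<lambda>\<tau>. (norm (blinfun_apply (W \<tau> s) y))\<^sup>2"]
    by simp
  have Fint: "F s y integrable_on S" if "s \<ge> 0" for s y
    unfolding F_def using V_int(1)[OF EF Mb \<omega> that, of y]
      Henstock_Kurzweil_Integration.integrable_restrict_UNIV[of "{s..}" "\<lambda>\<tau>. (norm (blinfun_apply (W \<tau> s) y))\<^sup>2"]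
    by (intro spike_i) simp
  define h where "h \<tau> = (if \<tau> \<in> {0..} then M\<^sup>2 * Bx\<^sup>2 * exp (-(2*\<omega>)*(\<tau> - Tm)) else 0)" for \<tau>
  have hint: "h integrable_on S"
  proof -
    have "(\<lambda>\<tau>. M\<^sup>2 * Bx\<^sup>2 * exp (-(2*\<omega>)*(\<tau> - Tm))) integrable_on {0..}"
    proof (rule integrable_on_mult_right)
      show "(\<lambda>\<tau>. exp (-(2*\<omega>)*(\<tau> - Tm))) integrable_on {0..}"
        using exp_int[of "2*\<omega>" Tm 0] \<omega> by (auto simp: integrable_on_def)
    qed
    thus ?thesis unfolding h_def
      using Henstock_Kurzweil_Integration.integrable_restrict_UNIV[of "{0..}" "\<lambda>\<tau>. M\<^sup>2 * Bx\<^sup>2 * exp (-(2*\<omega>)*(\<tau> - Tm))"]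
      by (intro spike_i) simp
  qed
  have le: "norm (F (t k) (x k) \<tau>) \<le> h \<tau>" for k \<tau>
  proof (cases "\<tau> \<in> {t k..}")
    case True
    have \<tau>0: "\<tau> \<ge> 0" using True tn[of k] by simp
    have "norm (blinfun_apply (W \<tau> (t k)) (x k)) \<le> M * exp (-\<omega> * (\<tau> - t k)) * norm (x k)"
      using Mb True tn[of k] by auto
    also have "\<dots> \<le> M * exp (-\<omega> * (\<tau> - Tm)) * Bx"
      using Tm[of k] Bx[of k] \<omega> M by (intro mult_mono) auto
    finally have "(norm (blinfun_apply (W \<tau> (t k)) (x k)))\<^sup>2 \<le> (M * exp (-\<omega> * (\<tau> - Tm)) * Bx)\<^sup>2"
      by (intro power_mono) auto
    also have "\<dots> = M\<^sup>2 * Bx\<^sup>2 * exp (-(2*\<omega>)*(\<tau> - Tm))"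
      by (simp add: power_mult_distrib power2_eq_square exp_add[symmetric] algebra_simps)
    finally show ?thesis using True \<tau>0 by (simp add: F_def h_def)
  next
    case False
    thus ?thesis by (simp add: F_def h_def)
  qed
  have conv: "(\<lambda>k. F (t k) (x k) \<tau>) \<longlonglongrightarrow> F t0 x0 \<tau>" if "\<tau> \<in> S" for \<tau>
  proof (cases "\<tau> < t0")
    case True
    have "eventually (\<lambda>k. \<tau> < t k) sequentially" by (rule order_tendstoD(1)[OF tl True])
    hence "eventually (\<lambda>k. F (t k) (x k) \<tau> = 0) sequentially" by eventually_elim (simp add: F_def)
    hence "(\<lambda>k. F (t k) (x k) \<tau>) \<longlonglongrightarrow> 0" by (rule tendsto_eventually)
    thus ?thesis using True by (simp add: F_def)
  next
    case False
    hence gt: "t0 < \<tau>" using that by (auto simp: S_def)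
    have ev: "eventually (\<lambda>k. t k < \<tau>) sequentially" by (rule order_tendstoD(2)[OF tl gt])
    define t' where "t' k = min (t k) \<tau>" for k
    have t'l: "t' \<longlonglongrightarrow> t0" unfolding t'_def using tendsto_min[OF tl tendsto_const[of \<tau>]] gt by simp
    have C: "continuous_on {(t,s). 0 \<le> s \<and> s \<le> t} (\<lambda>(t,s). blinfun_apply (W t s) x0)"
      using EF unfolding evolution_family_def by blast
    have "((\<lambda>(t,s). blinfun_apply (W t s) x0) \<circ> (\<lambda>k. (\<tau>, t' k))) \<longlonglongrightarrow> (\<lambda>(t,s). blinfun_apply (W t s) x0) (\<tau>, t0)"
      using C unfolding continuous_on_sequentially
      using gt t0 tn by (intro C[unfolded continuous_on_sequentially, rule_format]) 
        (use t'l[unfolded t'_def] in \<open>auto simp: t'_def intro!: tendsto_Pair\<close>)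
    hence c2: "(\<lambda>k. blinfun_apply (W \<tau> (t' k)) x0) \<longlonglongrightarrow> blinfun_apply (W \<tau> t0) x0" by (simp add: o_def)
    have c2': "(\<lambda>k. blinfun_apply (W \<tau> (t k)) x0) \<longlonglongrightarrow> blinfun_apply (W \<tau> t0) x0"
    proof (rule Lim_transform_eventually[OF c2])
      show "eventually (\<lambda>k. blinfun_apply (W \<tau> (t' k)) x0 = blinfun_apply (W \<tau> (t k)) x0) sequentially"
        using ev by eventually_elim (simp add: t'_def)
    qed
    have c1: "(\<lambda>k. blinfun_apply (W \<tau> (t k)) (x k - x0)) \<longlonglongrightarrow> 0"
    proof (rule Lim_null_comparison)
      show "eventually (\<lambda>k. norm (blinfun_apply (W \<tau> (t k)) (x k - x0)) \<le> M * norm (x k - x0)) sequentially"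
        using ev
      proof eventually_elim
        case (elim k)
        have "norm (blinfun_apply (W \<tau> (t k)) (x k - x0)) \<le> M * exp (-\<omega> * (\<tau> - t k)) * norm (x k - x0)"
          using Mb elim tn[of k] by auto
        also have "\<dots> \<le> M * 1 * norm (x k - x0)"
          using elim \<omega> M by (intro mult_mono) auto
        finally show ?case by simp
      qed
      have "(\<lambda>k. norm (x k - x0)) \<longlonglongrightarrow> 0" using xl by (simp add: tendsto_norm_zero_iff LIM_zero)
      thus "(\<lambda>k. M * norm (x k - x0)) \<longlonglongrightarrow> 0" by (rule tendsto_mult_right_zero)
    qed
    have "(\<lambda>k. blinfun_apply (W \<tau> (t k)) (x k - x0) + blinfun_apply (W \<tau> (t k)) x0) \<longlonglongrightarrow> 0 + blinfun_apply (W \<tau> t0) x0"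
      by (rule tendsto_add[OF c1 c2'])
    hence "(\<lambda>k. blinfun_apply (W \<tau> (t k)) (x k)) \<longlonglongrightarrow> blinfun_apply (W \<tau> t0) x0"
      by (simp add: blinfun.diff_right)
    hence c3: "(\<lambda>k. (norm (blinfun_apply (W \<tau> (t k)) (x k)))\<^sup>2) \<longlonglongrightarrow> (norm (blinfun_apply (W \<tau> t0) x0))\<^sup>2"
      by (intro tendsto_power tendsto_norm)
    have F0: "F t0 x0 \<tau> = (norm (blinfun_apply (W \<tau> t0) x0))\<^sup>2" using gt by (simp add: F_def)
    show ?thesis unfolding F0
    proof (rule Lim_transform_eventually[OF c3])
      show "eventually (\<lambda>k. (norm (blinfun_apply (W \<tau> (t k)) (x k)))\<^sup>2 = F (t k) (x k) \<tau>) sequentially"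
        using ev by eventually_elim (simp add: F_def)
    qed
  qed
  have "(\<lambda>k. integral S (F (t k) (x k))) \<longlonglongrightarrow> integral S (F t0 x0)"
    by (rule dominated_convergence(2)[OF Fint[OF tn] hint le conv])
  thus "(\<lambda>n. (\<lambda>(t,x). integral {t..} (\<lambda>\<tau>. (norm (blinfun_apply (W \<tau> t) x))\<^sup>2)) (u n)) \<longlonglongrightarrow>
        (\<lambda>(t,x). integral {t..} (\<lambda>\<tau>. (norm (blinfun_apply (W \<tau> t) x))\<^sup>2)) a"
    by (simp add: u_eq a0 Veq)
qed


lemma V_int_sub:
  assumes EF: "evolution_family A DA W"
    and Mb: "\<forall>s \<tau> v. 0 \<le> s \<and> s \<le> \<tau> \<longrightarrow> norm (blinfun_apply (W \<tau> s) v) \<le> M * exp (-\<omega> * (\<tau> - s)) * norm v"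
    and \<omega>: "\<omega> > 0" and s: "0 \<le> s" and s0: "s \<le> s0"
  shows "(\<lambda>\<tau>. (norm (blinfun_apply (W \<tau> s) v))\<^sup>2) integrable_on {s0..}"
proof -
  define g where "g \<tau> = M\<^sup>2 * (norm v)\<^sup>2 * exp (-(2*\<omega>)*(\<tau> - s))" for \<tau>
  have gi: "g integrable_on {s0..}"
    unfolding g_def using exp_int[of "2*\<omega>" s s0] \<omega>
    by (intro integrable_on_mult_right) (auto simp: integrable_on_def)
  have le: "norm ((norm (blinfun_apply (W \<tau> s) v))\<^sup>2) \<le> g \<tau>" if "\<tau> \<in> {s0..}" for \<tau>
  proof -
    have "norm (blinfun_apply (W \<tau> s) v) \<le> M * exp (-\<omega> * (\<tau> - s)) * norm v" using Mb s s0 that by auto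
    hence "(norm (blinfun_apply (W \<tau> s) v))\<^sup>2 \<le> (M * exp (-\<omega> * (\<tau> - s)) * norm v)\<^sup>2"
      by (intro power_mono) auto
    also have "\<dots> = g \<tau>" unfolding g_def
      by (simp add: power_mult_distrib power2_eq_square exp_add[symmetric] algebra_simps)
    finally show ?thesis by simp
  qed
  have cont: "continuous_on {s0..} (\<lambda>\<tau>. (norm (blinfun_apply (W \<tau> s) v))\<^sup>2)"
    by (rule continuous_on_subset[OF continuous_on_power[OF continuous_on_norm[OF cont_W[OF EF s]]]])
       (use s0 in auto)
  show ?thesis
    by (rule measurable_bounded_by_integrable_imp_integrable[OF continuous_imp_measurable_on_sets_lebesgue[OF cont] gi le])
       auto
qed

lemma diff_bound:
  assumes EF: "evolution_family A DA W"
    and Mb: "\<forall>s \<tau> v. 0 \<le> s \<and> s \<le> \<tau> \<longrightarrow> norm (blinfun_apply (W \<tau> s) v) \<le> M * exp (-\<omega> * (\<tau> - s)) * norm v"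
    and \<omega>: "\<omega> > 0" and M: "M \<ge> 1" and t: "0 \<le> t"
    and ms: "mild_sol W \<Psi> u t x d y" and h: "0 < h" "h \<le> d"
    and Kb: "\<forall>s\<in>{t..t+h}. norm (\<Psi> s (y s) (u s)) \<le> K" and K: "K \<ge> 0"
    and low: "h * ((norm x)\<^sup>2 - \<eta>) \<le> integral {t..t+h} (\<lambda>\<tau>. (norm (blinfun_apply (W \<tau> t) x))\<^sup>2)"
  shows "integral {t+h..} (\<lambda>\<tau>. (norm (blinfun_apply (W \<tau> (t+h)) (y (t+h))))\<^sup>2)
          - integral {t..} (\<lambda>\<tau>. (norm (blinfun_apply (W \<tau> t) x))\<^sup>2)
         \<le> h * (- ((norm x)\<^sup>2 - \<eta>) + M\<^sup>2 / \<omega> * norm x * K + h * (M\<^sup>2 * K\<^sup>2 / (2*\<omega>)))"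
proof -
  define F where "F s = \<Psi> s (y s) (u s)" for s
  define X where "X = norm x"
  have X0: "X \<ge> 0" by (simp add: X_def)
  have th: "t+h \<in> {t..t+d}" using h by auto
  have Iint: "(\<lambda>s. blinfun_apply (W (t+h) s) (F s)) integrable_on {t..t+h}"
    and yeq: "y (t+h) = blinfun_apply (W (t+h) t) x + integral {t..t+h} (\<lambda>s. blinfun_apply (W (t+h) s) (F s))"
    using ms th unfolding mild_sol_def F_def by blast+
  define I where "I = integral {t..t+h} (\<lambda>s. blinfun_apply (W (t+h) s) (F s))"
  have comp: "blinfun_apply (W \<tau> r) (blinfun_apply (W r s) w) = blinfun_apply (W \<tau> s) w"
    if "0 \<le> s" "s \<le> r" "r \<le> \<tau>" for \<tau> r s w
    using EF that unfolding evolution_family_def by auto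
  have zhas: "((\<lambda>s. blinfun_apply (W \<tau> s) (F s)) has_integral blinfun_apply (W \<tau> (t+h)) I) {t..t+h}"
    if "t+h \<le> \<tau>" for \<tau>
  proof -
    have base: "((blinfun_apply (W \<tau> (t+h)) \<circ> (\<lambda>s. blinfun_apply (W (t+h) s) (F s))) has_integral blinfun_apply (W \<tau> (t+h)) I) {t..t+h}"
      unfolding I_def by (rule has_integral_linear[OF integrable_integral[OF Iint] blinfun.bounded_linear_right])
    show ?thesis
    proof (rule has_integral_eq[OF _ base])
    fix s assume "s \<in> {t..t+h}"
    thus "(blinfun_apply (W \<tau> (t+h)) \<circ> (\<lambda>s. blinfun_apply (W (t+h) s) (F s))) s = blinfun_apply (W \<tau> s) (F s)"
      using comp[of s "t+h" \<tau>] t that by auto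
    qed
  qed
  have zb: "norm (blinfun_apply (W \<tau> (t+h)) I) \<le> h * M * exp (-\<omega> * (\<tau> - (t+h))) * K"
    if "t+h \<le> \<tau>" for \<tau>
  proof -
    have "norm (blinfun_apply (W \<tau> (t+h)) I) \<le> (M * exp (-\<omega> * (\<tau> - (t+h))) * K) * measure lborel {t..t+h}"
    proof (rule has_integral_bound_real[OF _ _ zhas[OF that], of _ "{}"])
      fix s assume s: "s \<in> {t..t+h} - {}"
      have "norm (blinfun_apply (W \<tau> s) (F s)) \<le> M * exp (-\<omega> * (\<tau> - s)) * norm (F s)"
        using Mb s t that by auto
      also have "\<dots> \<le> M * exp (-\<omega> * (\<tau> - (t+h))) * K"
        using s Kb \<omega> M by (intro mult_mono) (auto simp: F_def)
      finally show "norm (blinfun_apply (W \<tau> s) (F s)) \<le> M * exp (-\<omega> * (\<tau> - (t+h))) * K" .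
    qed (use M K in auto)
    thus ?thesis using h by (simp add: algebra_simps)
  qed
  have split: "blinfun_apply (W \<tau> (t+h)) (y (t+h)) = blinfun_apply (W \<tau> t) x + blinfun_apply (W \<tau> (t+h)) I"
    if "t+h \<le> \<tau>" for \<tau>
    unfolding yeq I_def[symmetric] using comp[of t "t+h" \<tau> x] t h that by (simp add: blinfun.add_right)
  define c1 where "c1 = 2 * M\<^sup>2 * X * h * K * exp (\<omega> * h)"
  define c2 where "c2 = h\<^sup>2 * M\<^sup>2 * K\<^sup>2"
  define g where "g \<tau> = (norm (blinfun_apply (W \<tau> t) x))\<^sup>2 + c1 * exp (-(2*\<omega>)*(\<tau> - t)) + c2 * exp (-(2*\<omega>)*(\<tau> - (t+h)))" for \<tau>
  have pt: "(norm (blinfun_apply (W \<tau> (t+h)) (y (t+h))))\<^sup>2 \<le> g \<tau>" if "\<tau> \<in> {t+h..}" for \<tau>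
  proof -
    define a where "a = blinfun_apply (W \<tau> t) x"
    define z where "z = blinfun_apply (W \<tau> (t+h)) I"
    define AA where "AA = M * exp (-\<omega> * (\<tau> - t)) * X"
    define Z where "Z = h * M * exp (-\<omega> * (\<tau> - (t+h))) * K"
    have aA: "norm a \<le> AA" unfolding a_def AA_def X_def using Mb t h that by auto
    have zZ: "norm z \<le> Z" unfolding z_def Z_def using zb that by auto
    have "(norm (a + z))\<^sup>2 \<le> (norm a + norm z)\<^sup>2" by (intro power_mono norm_triangle_ineq) auto
    also have "\<dots> = (norm a)\<^sup>2 + 2 * norm a * norm z + (norm z)\<^sup>2" by (simp add: power2_sum)
    also have "\<dots> \<le> (norm a)\<^sup>2 + 2 * AA * Z + Z\<^sup>2"
      using aA zZ order_trans[OF norm_ge_zero aA] by (intro add_mono mult_mono power_mono) auto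
    also have "2 * AA * Z = c1 * exp (-(2*\<omega>)*(\<tau> - t))"
    proof -
      have "exp (-\<omega> * (\<tau> - t)) * exp (-\<omega> * (\<tau> - (t+h))) = exp (\<omega> * h) * exp (-(2*\<omega>)*(\<tau> - t))"
        by (simp add: exp_add[symmetric] algebra_simps)
      thus ?thesis unfolding AA_def Z_def c1_def
        by (simp add: power2_eq_square)
    qed
    also have "Z\<^sup>2 = c2 * exp (-(2*\<omega>)*(\<tau> - (t+h)))"
    proof -
      have "exp (-\<omega> * (\<tau> - (t+h))) * exp (-\<omega> * (\<tau> - (t+h))) = exp (-(2*\<omega>)*(\<tau> - (t+h)))"
        by (simp add: exp_add[symmetric] algebra_simps)
      thus ?thesis unfolding Z_def c2_def
        by (simp add: power2_eq_square)
    qed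
    finally show ?thesis using split[of \<tau>] that by (simp add: g_def a_def z_def)
  qed
  have aint: "(\<lambda>\<tau>. (norm (blinfun_apply (W \<tau> t) x))\<^sup>2) integrable_on {t+h..}"
    by (rule V_int_sub[OF EF Mb \<omega> t]) (use h in auto)
  have e1: "((\<lambda>\<tau>. c1 * exp (-(2*\<omega>)*(\<tau> - t))) has_integral c1 * (exp (-(2*\<omega>)*((t+h) - t))/(2*\<omega>))) {t+h..}"
    using exp_int[of "2*\<omega>" t "t+h"] \<omega> by (intro has_integral_mult_right) auto
  have e2: "((\<lambda>\<tau>. c2 * exp (-(2*\<omega>)*(\<tau> - (t+h)))) has_integral c2 * (exp (-(2*\<omega>)*((t+h) - (t+h)))/(2*\<omega>))) {t+h..}"
    using exp_int[of "2*\<omega>" "t+h" "t+h"] \<omega> by (intro has_integral_mult_right) auto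
  have ghas: "(g has_integral (integral {t+h..} (\<lambda>\<tau>. (norm (blinfun_apply (W \<tau> t) x))\<^sup>2)
        + c1 * (exp (-(2*\<omega>)*((t+h) - t))/(2*\<omega>)) + c2 * (exp (-(2*\<omega>)*((t+h) - (t+h)))/(2*\<omega>)))) {t+h..}"
    unfolding g_def by (intro has_integral_add e1 e2 integrable_integral aint)
  have lhs_int: "(\<lambda>\<tau>. (norm (blinfun_apply (W \<tau> (t+h)) (y (t+h))))\<^sup>2) integrable_on {t+h..}"
    by (rule V_int(1)[OF EF Mb \<omega>]) (use t h in auto)
  have A1: "integral {t+h..} (\<lambda>\<tau>. (norm (blinfun_apply (W \<tau> (t+h)) (y (t+h))))\<^sup>2)
      \<le> integral {t+h..} (\<lambda>\<tau>. (norm (blinfun_apply (W \<tau> t) x))\<^sup>2)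
        + c1 * (exp (-(2*\<omega>)*((t+h) - t))/(2*\<omega>)) + c2 * (exp (-(2*\<omega>)*((t+h) - (t+h)))/(2*\<omega>))"
    using integral_le[OF lhs_int has_integral_integrable[OF ghas] pt] integral_unique[OF ghas] by simp
  have cint: "(\<lambda>\<tau>. (norm (blinfun_apply (W \<tau> t) x))\<^sup>2) integrable_on {t..t+h}"
    by (rule integrable_continuous_interval, rule continuous_on_subset[OF continuous_on_power[OF continuous_on_norm[OF cont_W[OF EF t]]]]) auto
  have un: "{t..t+h} \<union> {t+h..} = {t..}" using h by auto
  have A2: "integral {t..} (\<lambda>\<tau>. (norm (blinfun_apply (W \<tau> t) x))\<^sup>2)
      = integral {t..t+h} (\<lambda>\<tau>. (norm (blinfun_apply (W \<tau> t) x))\<^sup>2) + integral {t+h..} (\<lambda>\<tau>. (norm (blinfun_apply (W \<tau> t) x))\<^sup>2)"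
  proof -
    have "negligible ({t..t+h} \<inter> {t+h..})" by (rule negligible_subset[of "{t+h}"]) auto
    thus ?thesis using integral_Un[OF cint aint] un by simp
  qed
  have A3: "c1 * (exp (-(2*\<omega>)*((t+h) - t))/(2*\<omega>)) \<le> h * (M\<^sup>2 / \<omega> * X * K)"
  proof -
    have "exp (\<omega> * h) * exp (-(2*\<omega>)*((t+h) - t)) = exp (-\<omega> * h)" by (simp add: exp_add[symmetric] algebra_simps)
    also have "\<dots> \<le> 1" using \<omega> h by simp
    finally have ee: "exp (\<omega> * h) * exp (-(2*\<omega>)*((t+h) - t)) \<le> 1" .
    have "c1 * (exp (-(2*\<omega>)*((t+h) - t))/(2*\<omega>)) = (M\<^sup>2 * X * h * K / \<omega>) * (exp (\<omega> * h) * exp (-(2*\<omega>)*((t+h) - t)))"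
      unfolding c1_def using \<omega> by (simp add: field_simps)
    also have "\<dots> \<le> (M\<^sup>2 * X * h * K / \<omega>) * 1"
      using ee X0 h K \<omega> by (intro mult_left_mono) auto
    finally show ?thesis by (simp add: field_simps)
  qed
  have A4: "c2 * (exp (-(2*\<omega>)*((t+h) - (t+h)))/(2*\<omega>)) = h * (h * (M\<^sup>2 * K\<^sup>2 / (2*\<omega>)))"
    unfolding c2_def by (simp add: power2_eq_square)
  have R: "h * (- ((norm x)\<^sup>2 - \<eta>) + M\<^sup>2 / \<omega> * norm x * K + h * (M\<^sup>2 * K\<^sup>2 / (2*\<omega>)))
     = - (h * ((norm x)\<^sup>2 - \<eta>)) + h * (M\<^sup>2 / \<omega> * X * K) + h * (h * (M\<^sup>2 * K\<^sup>2 / (2*\<omega>)))"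
    by (simp add: X_def algebra_simps)
  show ?thesis unfolding R using A1 A2 A3 A4 low by linarith
qed


lemma dini_limsup:
  assumes EF: "evolution_family A DA W"
    and Mb: "\<forall>s \<tau> v. 0 \<le> s \<and> s \<le> \<tau> \<longrightarrow> norm (blinfun_apply (W \<tau> s) v) \<le> M * exp (-\<omega> * (\<tau> - s)) * norm v"
    and \<omega>: "\<omega> > 0" and M: "M \<ge> 1" and t: "0 \<le> t"
    and ms: "mild_sol W \<Psi> u t x d y"
    and Kev: "\<forall>\<eta>>0. \<exists>\<delta>>0. \<forall>s\<in>{t..t+\<delta>}. norm (\<Psi> s (y s) (u s)) \<le> K0 + \<eta>" and K0: "K0 \<ge> 0"
  shows "Limsup (at_right 0) (\<lambda>h. ereal ((integral {t+h..} (\<lambda>\<tau>. (norm (blinfun_apply (W \<tau> (t+h)) (y (t+h))))\<^sup>2)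
          - integral {t..} (\<lambda>\<tau>. (norm (blinfun_apply (W \<tau> t) x))\<^sup>2)) / h))
         \<le> ereal (- (norm x)\<^sup>2 + M\<^sup>2 / \<omega> * norm x * K0)"
  unfolding Limsup_le_iff
proof (intro allI impI)
  define X where "X = norm x"
  define L where "L = - X\<^sup>2 + M\<^sup>2 / \<omega> * X * K0"
  fix c assume "ereal (- (norm x)\<^sup>2 + M\<^sup>2 / \<omega> * norm x * K0) < c"
  hence "ereal L < c" by (simp add: L_def X_def)
  then obtain z where z: "L < z" "ereal z < c" using ereal_dense2 by force
  have d: "d > 0" using ms unfolding mild_sol_def by simp
  define Lf where "Lf \<eta> = - (X\<^sup>2 - \<eta>) + M\<^sup>2 / \<omega> * X * (K0 + \<eta>)" for \<eta>
  have "(Lf \<longlongrightarrow> Lf 0) (at_right 0)" unfolding Lf_def by (intro tendsto_intros)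
  moreover have "Lf 0 = L" by (simp add: Lf_def L_def)
  ultimately have "eventually (\<lambda>\<eta>. Lf \<eta> < z) (at_right 0)" using z(1) by (simp add: order_tendstoD(2))
  then obtain b where b: "b > 0" "\<And>\<eta>. 0 < \<eta> \<Longrightarrow> \<eta> < b \<Longrightarrow> Lf \<eta> < z"
    unfolding eventually_at_right_field by auto
  define \<eta> where "\<eta> = b/2"
  have \<eta>: "\<eta> > 0" "Lf \<eta> < z" using b by (auto simp: \<eta>_def)
  obtain \<delta> where \<delta>: "\<delta> > 0" "\<forall>s\<in>{t..t+\<delta>}. norm (\<Psi> s (y s) (u s)) \<le> K0 + \<eta>" using Kev \<eta>(1) by blast
  obtain h0 where h0: "h0 > 0" "\<forall>h. 0 < h \<and> h \<le> h0 \<longrightarrow>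
           h * ((norm x)\<^sup>2 - \<eta>) \<le> integral {t..t+h} (\<lambda>\<tau>. (norm (blinfun_apply (W \<tau> t) x))\<^sup>2)"
    using V_lower[OF EF t \<eta>(1)] by blast
  define P where "P h = Lf \<eta> + h * (M\<^sup>2 * (K0 + \<eta>)\<^sup>2 / (2*\<omega>))" for h
  have "(P \<longlongrightarrow> P 0) (at_right 0)" unfolding P_def by (intro tendsto_intros)
  moreover have "P 0 = Lf \<eta>" by (simp add: P_def)
  ultimately have evP: "eventually (\<lambda>h. P h < z) (at_right 0)" using \<eta>(2) by (simp add: order_tendstoD(2))
  have evh: "eventually (\<lambda>h. 0 < h \<and> h \<le> min d (min \<delta> h0)) (at_right 0)"
    unfolding eventually_at_right_field using d \<delta> h0 by (intro exI[of _ "min d (min \<delta> h0)"]) auto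
  show "eventually (\<lambda>h. c > ereal ((integral {t+h..} (\<lambda>\<tau>. (norm (blinfun_apply (W \<tau> (t+h)) (y (t+h))))\<^sup>2)
          - integral {t..} (\<lambda>\<tau>. (norm (blinfun_apply (W \<tau> t) x))\<^sup>2)) / h)) (at_right 0)"
    using evP evh
  proof eventually_elim
    case (elim h)
    have hh: "0 < h" "h \<le> d" using elim by auto
    have Kb: "\<forall>s\<in>{t..t+h}. norm (\<Psi> s (y s) (u s)) \<le> K0 + \<eta>" using \<delta>(2) elim by auto
    have low: "h * ((norm x)\<^sup>2 - \<eta>) \<le> integral {t..t+h} (\<lambda>\<tau>. (norm (blinfun_apply (W \<tau> t) x))\<^sup>2)"
      using h0(2) elim by auto
    have db: "integral {t+h..} (\<lambda>\<tau>. (norm (blinfun_apply (W \<tau> (t+h)) (y (t+h))))\<^sup>2)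
          - integral {t..} (\<lambda>\<tau>. (norm (blinfun_apply (W \<tau> t) x))\<^sup>2) \<le> h * P h"
      using diff_bound[OF EF Mb \<omega> M t ms hh Kb _ low] K0 \<eta>(1) by (simp add: P_def Lf_def X_def)
    hence "(integral {t+h..} (\<lambda>\<tau>. (norm (blinfun_apply (W \<tau> (t+h)) (y (t+h))))\<^sup>2)
          - integral {t..} (\<lambda>\<tau>. (norm (blinfun_apply (W \<tau> t) x))\<^sup>2)) / h \<le> P h"
      using hh by (simp add: divide_le_eq mult.commute)
    hence "ereal ((integral {t+h..} (\<lambda>\<tau>. (norm (blinfun_apply (W \<tau> (t+h)) (y (t+h))))\<^sup>2)
          - integral {t..} (\<lambda>\<tau>. (norm (blinfun_apply (W \<tau> t) x))\<^sup>2)) / h) < ereal z" using elim by simp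
    thus ?case using z(2) by (meson order.strict_trans)
  qed
qed


theorem mainTheorem12:
  fixes A :: "real \<Rightarrow> 'x::banach \<Rightarrow> 'x" and DA :: "real \<Rightarrow> 'x set"
    and W :: "real \<Rightarrow> real \<Rightarrow> 'x \<Rightarrow>\<^sub>L 'x"
    and B :: "real \<Rightarrow> 'u::banach \<Rightarrow>\<^sub>L 'x"
    and \<psi> :: "real \<Rightarrow> 'x \<Rightarrow> 'u \<Rightarrow> 'x"
  assumes "evolution_family A DA W"
    and "continuous_on {0..} B" and "bounded (B ` {0..})"
    and "H1 (\<lambda>t x v. blinfun_apply (B t) v + \<psi> t x v)"
    and "H2 \<psi>"
    and "zero_UGAS W"
  shows "ncLISS_Lyapunov_impl W (\<lambda>t x v. blinfun_apply (B t) v + \<psi> t x v)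
           (\<lambda>t x. integral {t..} (\<lambda>\<tau>. (norm (blinfun_apply (W \<tau> t) x))\<^sup>2))"
proof -
  note EF = assms(1)
  obtain M \<omega> where M: "M \<ge> 1" and \<omega>: "\<omega> > 0"
    and Mb: "\<forall>s \<tau> v. 0 \<le> s \<and> s \<le> \<tau> \<longrightarrow> norm (blinfun_apply (W \<tau> s) v) \<le> M * exp (-\<omega> * (\<tau> - s)) * norm v"
    using exp_stab[OF EF assms(6)] by blast
  define Cc where "Cc = M\<^sup>2 / \<omega>"
  have Cc: "Cc > 0" using M \<omega> by (simp add: Cc_def)
  define a where "a = 1 / (4 * Cc)"
  have a: "a > 0" using Cc by (simp add: a_def)
  obtain b \<rho> where b: "b > 0" and \<rho>: "\<rho> > 0"
    and \<psi>b: "\<forall>t x v. t \<ge> 0 \<and> norm x \<le> \<rho> \<and> norm v \<le> \<rho> \<longrightarrow> norm (\<psi> t x v) \<le> a * norm x + b * norm v"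
    using assms(5) a unfolding H2_def by blast
  obtain Bm0 where Bm0: "\<forall>s\<in>B ` {0..}. norm s \<le> Bm0" using assms(3) unfolding bounded_iff by blast
  define Bm where "Bm = max Bm0 0"
  have Bm: "Bm \<ge> 0" "\<And>s. s \<ge> 0 \<Longrightarrow> norm (B s) \<le> Bm" using Bm0 by (auto simp: Bm_def intro: le_max_iff_disj[THEN iffD2])
  define V where "V t x = integral {t..} (\<lambda>\<tau>. (norm (blinfun_apply (W \<tau> t) x))\<^sup>2)" for t x
  define \<alpha>2 where "\<alpha>2 r = M\<^sup>2 / (2*\<omega>) * r\<^sup>2" for r :: real
  define k where "k = 4 * Cc * (Bm + b) + 1"
  have k: "k > 0" using Cc Bm b by (simp add: k_def add_pos_nonneg)
  define \<kappa> where "\<kappa> r = k * r" for r :: real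
  define \<mu> where "\<mu> r = \<omega> / M\<^sup>2 * r" for r :: real
  have c2: "M\<^sup>2 / (2*\<omega>) > 0" using M \<omega> by simp
  have Vint: "(\<lambda>\<tau>. (norm (blinfun_apply (W \<tau> t) x))\<^sup>2) integrable_on {t..}" if "t \<ge> 0" for t x
    by (rule V_int(1)[OF EF Mb \<omega> that])
  have Vle: "V t x \<le> \<alpha>2 (norm x)" if "t \<ge> 0" for t x
    unfolding V_def \<alpha>2_def by (rule V_int(2)[OF EF Mb \<omega> that])
  have Vnn: "V t x \<ge> 0" if "t \<ge> 0" for t x
    unfolding V_def by (rule integral_nonneg[OF Vint[OF that]]) auto
  have Vpos: "V t x > 0" if t0: "t \<ge> 0" and x0: "x \<noteq> 0" for t x
  proof -
    have xx: "(norm x)\<^sup>2 / 2 > 0" using x0 by simp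
    obtain h0 where h0: "h0 > 0" "h0 * ((norm x)\<^sup>2 - (norm x)\<^sup>2 / 2) \<le> integral {t..t+h0} (\<lambda>\<tau>. (norm (blinfun_apply (W \<tau> t) x))\<^sup>2)"
      using V_lower[OF EF t0 xx, of x] by auto
    have "integral {t..t+h0} (\<lambda>\<tau>. (norm (blinfun_apply (W \<tau> t) x))\<^sup>2) \<le> V t x"
      unfolding V_def
    proof (rule integral_subset_le)
      show "(\<lambda>\<tau>. (norm (blinfun_apply (W \<tau> t) x))\<^sup>2) integrable_on {t..t+h0}"
        by (rule integrable_continuous_interval, rule continuous_on_subset[OF continuous_on_power[OF continuous_on_norm[OF cont_W[OF EF t0]]]]) auto
    qed (use Vint[OF t0] in auto)
    moreover have "h0 * ((norm x)\<^sup>2 - (norm x)\<^sup>2 / 2) > 0" using h0(1) xx by simp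
    ultimately show ?thesis using h0(2) by linarith
  qed
  have lie: "lie_deriv_le W (\<lambda>t x v. blinfun_apply (B t) v + \<psi> t x v) V u t x (- \<mu> (V t x))"
    if t: "t \<ge> 0" and xr: "norm x \<le> \<rho>/2" and pcu: "pc_input u" and ur: "input_norm u \<le> \<rho>/2"
      and xk: "norm x \<ge> \<kappa> (input_norm u)" for t x u
    unfolding lie_deriv_le_def
  proof (intro allI impI)
    fix d y assume ms: "mild_sol W (\<lambda>t x v. blinfun_apply (B t) v + \<psi> t x v) u t x d y"
    define U where "U = input_norm u"
    define X where "X = norm x"
    have bdd: "bdd_above ((\<lambda>s. norm (u s)) ` {0..})"
    proof -
      obtain c where "\<forall>v\<in>u ` {0..}. norm v \<le> c" using pcu unfolding pc_input_def bounded_iff by blast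
      thus ?thesis by (intro bdd_aboveI2[of _ _ c]) auto
    qed
    have uU: "norm (u s) \<le> U" if "s \<ge> 0" for s
      unfolding U_def input_norm_def by (rule cSUP_upper[OF _ bdd]) (use that in auto)
    have U0: "U \<ge> 0" using uU[of 0] norm_ge_zero[of "u 0"] by linarith
    define K0 where "K0 = (Bm + b) * U + a * X"
    have K0: "K0 \<ge> 0" using Bm b U0 a by (simp add: K0_def X_def)
    have d: "d > 0" and ycont: "continuous_on {t..t+d} y" using ms unfolding mild_sol_def by auto
    have yt: "y t = x"
    proof -
      have "t \<in> {t..t+d}" using d by auto
      hence "y t = blinfun_apply (W t t) x + integral {t..t} (\<lambda>s. blinfun_apply (W t s) ((\<lambda>t x v. blinfun_apply (B t) v + \<psi> t x v) s (y s) (u s)))"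
        using ms unfolding mild_sol_def by blast
      thus ?thesis using EF t unfolding evolution_family_def by simp
    qed
    have Kev: "\<forall>\<eta>>0. \<exists>\<delta>>0. \<forall>s\<in>{t..t+\<delta>}. norm ((\<lambda>t x v. blinfun_apply (B t) v + \<psi> t x v) s (y s) (u s)) \<le> K0 + \<eta>"
    proof (intro allI impI)
      fix \<eta> :: real assume \<eta>: "\<eta> > 0"
      define e where "e = min (\<eta> / a) (\<rho>/2)"
      have e: "e > 0" using \<eta> a \<rho> by (simp add: e_def)
      obtain \<delta>' where \<delta>': "\<delta>' > 0" "\<And>s. s \<in> {t..t+d} \<Longrightarrow> dist s t < \<delta>' \<Longrightarrow> dist (y s) (y t) < e"
        using ycont e d unfolding continuous_on_iff by (metis atLeastAtMost_iff le_add_same_cancel1 less_imp_le order_refl)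
      define \<delta> where "\<delta> = min (\<delta>'/2) d"
      show "\<exists>\<delta>>0. \<forall>s\<in>{t..t+\<delta>}. norm ((\<lambda>t x v. blinfun_apply (B t) v + \<psi> t x v) s (y s) (u s)) \<le> K0 + \<eta>"
      proof (intro exI[of _ \<delta>] conjI ballI)
        show "\<delta> > 0" using \<delta>' d by (simp add: \<delta>_def)
        fix s assume s: "s \<in> {t..t+\<delta>}"
        have s0: "s \<ge> 0" using s t by auto
        have "dist (y s) x < e" using \<delta>'(2)[of s] s yt \<delta>'(1) by (auto simp: \<delta>_def dist_real_def)
        hence ys: "norm (y s) \<le> X + e" unfolding X_def dist_norm by (metis add.commute norm_triangle_sub order.strict_implies_order order_trans add_le_cancel_left norm_minus_commute)
        have ysr: "norm (y s) \<le> \<rho>" using ys xr unfolding e_def X_def by linarith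
        have usr: "norm (u s) \<le> \<rho>" using uU[OF s0] ur unfolding U_def using \<rho> by linarith
        have "norm (blinfun_apply (B s) (u s) + \<psi> s (y s) (u s)) \<le> norm (blinfun_apply (B s) (u s)) + norm (\<psi> s (y s) (u s))"
          by (rule norm_triangle_ineq)
        also have "norm (blinfun_apply (B s) (u s)) \<le> Bm * U"
          using norm_blinfun[of "B s" "u s"] Bm(2)[OF s0] uU[OF s0] Bm(1)
          by (meson mult_mono norm_ge_zero order_trans)
        also have "norm (\<psi> s (y s) (u s)) \<le> a * norm (y s) + b * norm (u s)"
          using \<psi>b s0 ysr usr by blast
        also have "a * norm (y s) \<le> a * X + \<eta>"
        proof -
          have "a * norm (y s) \<le> a * (X + e)" using ys a by (simp add: mult_left_mono)
          also have "a * e \<le> \<eta>" using a unfolding e_def by (simp add: min_def field_simps)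
          hence "a * (X + e) \<le> a * X + \<eta>" by (simp add: distrib_left)
          finally show ?thesis .
        qed
        also have "b * norm (u s) \<le> b * U" using b uU[OF s0] by simp
        finally show "norm ((\<lambda>t x v. blinfun_apply (B t) v + \<psi> t x v) s (y s) (u s)) \<le> K0 + \<eta>"
          by (simp add: K0_def algebra_simps)
      qed
    qed
    have LS: "Limsup (at_right 0) (\<lambda>h. ereal ((V (t + h) (y (t + h)) - V t x) / h)) \<le> ereal (- (norm x)\<^sup>2 + M\<^sup>2 / \<omega> * norm x * K0)"
      unfolding V_def by (rule dini_limsup[OF EF Mb \<omega> M t ms Kev K0])
    have ar: "- (norm x)\<^sup>2 + M\<^sup>2 / \<omega> * norm x * K0 \<le> - \<mu> (V t x)"
    proof -
      have "4 * Cc * (Bm + b) * U \<le> k * U" using U0 by (intro mult_right_mono) (auto simp: k_def)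
      also have "\<dots> \<le> X" using xk by (simp add: \<kappa>_def U_def X_def)
      finally have "Cc * (Bm + b) * U \<le> X / 4" by simp
      hence "Cc * (Bm + b) * U * X \<le> X / 4 * X" by (intro mult_right_mono) (auto simp: X_def)
      moreover have "Cc * (a * X) * X = X * X / 4" using Cc by (simp add: a_def)
      moreover have eq: "M\<^sup>2 / \<omega> * norm x * K0 = Cc * (Bm + b) * U * X + Cc * (a * X) * X"
        by (simp add: K0_def Cc_def X_def algebra_simps add_divide_distrib)
      ultimately have "M\<^sup>2 / \<omega> * norm x * K0 \<le> X\<^sup>2 / 2"
        unfolding eq power2_eq_square by linarith
      moreover have "\<mu> (V t x) \<le> X\<^sup>2 / 2"
      proof -
        have "\<mu> (V t x) \<le> \<omega> / M\<^sup>2 * \<alpha>2 (norm x)" unfolding \<mu>_def using Vle[OF t] \<omega> M by (intro mult_left_mono) auto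
        also have "\<dots> = X\<^sup>2 / 2" using \<omega> M by (simp add: \<alpha>2_def X_def field_simps)
        finally show ?thesis .
      qed
      ultimately show ?thesis unfolding X_def by linarith
    qed
    show "Limsup (at_right 0) (\<lambda>h. ereal ((V (t + h) (y (t + h)) - V t x) / h)) \<le> ereal (- \<mu> (V t x))"
      using LS ar by (meson ereal_less_eq(3) order_trans)
  qed
  have V0: "V t 0 = 0" for t by (simp add: V_def)
  have Vcont: "continuous_on ({0..} \<times> UNIV) (\<lambda>(t,x). V t x)"
    unfolding V_def by (rule V_cont[OF EF Mb \<omega> M])
  have cK: "classK (\<lambda>r. c * r)" if "c > 0" for c :: real
    unfolding classK_def using that by (auto intro!: continuous_intros strict_mono_onI)
  have cKinf: "classKinf \<alpha>2"
    unfolding classKinf_def classK_def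
  proof (intro conjI)
    show "continuous_on {0..} \<alpha>2" unfolding \<alpha>2_def by (intro continuous_intros)
    show "\<alpha>2 0 = 0" by (simp add: \<alpha>2_def)
    show "strict_mono_on {0..} \<alpha>2" unfolding \<alpha>2_def
    proof (rule strict_mono_onI)
      fix r s :: real assume "r \<in> {0..}" "s \<in> {0..}" "r < s"
      hence "r\<^sup>2 < s\<^sup>2" by (intro power_strict_mono) auto
      thus "M\<^sup>2 / (2*\<omega>) * r\<^sup>2 < M\<^sup>2 / (2*\<omega>) * s\<^sup>2" using c2 by (rule mult_strict_left_mono)
    qed
    show "filterlim \<alpha>2 at_top at_top" unfolding \<alpha>2_def
      by (rule filterlim_tendsto_pos_mult_at_top[OF tendsto_const c2 filterlim_pow_at_top[OF _ filterlim_ident]]) simp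
  qed
  have pd: "posdef \<mu>" unfolding posdef_def \<mu>_def using \<omega> M by (auto intro!: continuous_intros)
  show ?thesis
    unfolding ncLISS_Lyapunov_impl_def V_def[symmetric]
  proof (rule exI[of _ UNIV], rule exI[of _ \<alpha>2], rule exI[of _ \<kappa>], rule exI[of _ \<mu>], rule exI[of _ "\<rho>/2"], rule exI[of _ "\<rho>/2"], intro conjI)
  qed (use Vcont Vnn Vpos Vle cKinf pd \<rho> lie cK[OF k] V0 in \<open>auto simp: \<kappa>_def[abs_def]\<close>)
qed
end
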